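(* Let $N\ge 2$ and consider the cross gadget of size $N$ in the Clos network $C_{N,N}$, i.e. the set of flows consisting of one flow from source server $s_i^j$ (of input switch $I_i$) to destination server $t_j^i$ (of output switch $O_j$) with demand $1$, for each $i\in[N]$ and $j\in[N-1]$. Then every routing of this set with congestion $1$ satisfies: (1) for all $i\in[N]$, the $N-1$ flows leaving $I_i$ are assigned to $N-1$ different middle switches, and for all $j\in[N-1]$, the $N$ flows entering $O_j$ are assigned to $N$ different middle switches; (2) for all $i_1\neq i_2$ in $[N]$, the middle switch to which no flow leaving $I_{i_1}$ is assigned differs from the middle switch to which no flow leaving $I_{i_2}$ is assigned.
   Context: Clos network $C_{N,R}$: a directed graph with $N$ middle switches $M_1,\dots,M_N$, $R$ input switches $I_1,\dots,I_R$, $R$ output switches $O_1,\dots,O_R$, source servers $s_i^k$ attached to $I_i$ and destination servers $t_i^k$ attached to $O_i$ ($i\in[R]$, $k\in[N]$), with edges $s_i^kI_i$, $I_iM_m$, $M_mO_i$, $O_it_i^k$; all links have capacity $1$. A routing assigns each flow $f$ (from $I_{i(f)}$ to $O_{j(f)}$, demand $\mathrm{dem}(f)$) a single middle switch $r(f)\in[N]$; its congestion is $\max_{i\in[R],m\in[N]}\max\{\sum_{f:i(f)=i,r(f)=m}\mathrm{dem}(f),\ \sum_{f:j(f)=i,r(f)=m}\mathrm{dem}(f)\}$. *)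

theory Defs
  imports Complex_Main
begin

text \<open>A set of flows F in the Clos network C_{N,R}: each flow f goes from input switch
  I_(src f) to output switch O_(dst f), with demand dem f. Switch indices are 1-based.
  A routing assigns each flow a middle switch r f in {1..N}.\<close>

definition is_routing :: "nat \<Rightarrow> 'f set \<Rightarrow> ('f \<Rightarrow> nat) \<Rightarrow> bool" where
  "is_routing N F r \<longleftrightarrow> (\<forall>f\<in>F. r f \<in> {1..N})"

definition congestion ::
  "nat \<Rightarrow> nat \<Rightarrow> 'f set \<Rightarrow> ('f \<Rightarrow> nat) \<Rightarrow> ('f \<Rightarrow> nat) \<Rightarrow> ('f \<Rightarrow> real) \<Rightarrow> ('f \<Rightarrow> nat) \<Rightarrow> real"
  where
  "congestion N R F src dst dem r =
     Max ((\<lambda>(i, m). max (\<Sum>f\<in>{f\<in>F. src f = i \<and> r f = m}. dem f)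
                          (\<Sum>f\<in>{f\<in>F. dst f = i \<and> r f = m}. dem f)) ` ({1..R} \<times> {1..N}))"

definition cross_flows :: "nat \<Rightarrow> (nat \<times> nat) set" where
  "cross_flows N = {1..N} \<times> {1..N-1}"

definition cross_src :: "nat \<times> nat \<Rightarrow> nat" where "cross_src f = fst f"
definition cross_dst :: "nat \<times> nat \<Rightarrow> nat" where "cross_dst f = snd f"
definition cross_dem :: "nat \<times> nat \<Rightarrow> real" where "cross_dem f = 1"

end

theory Submission
  imports Defs
begin

theorem mainTheorem8:
  fixes N :: nat and r :: "nat \<times> nat \<Rightarrow> nat"
  assumes "N \<ge> 2"
    and "is_routing N (cross_flows N) r"
    and "congestion N N (cross_flows N) cross_src cross_dst cross_dem r = 1"
  shows "(\<forall>i\<in>{1..N}. inj_on (\<lambda>j. r (i, j)) {1..N-1})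
       \<and> (\<forall>j\<in>{1..N-1}. inj_on (\<lambda>i. r (i, j)) {1..N})
       \<and> (\<forall>i1\<in>{1..N}. \<forall>i2\<in>{1..N}. i1 \<noteq> i2 \<longrightarrow>
            (\<forall>m1\<in>{1..N}. \<forall>m2\<in>{1..N}.
               m1 \<notin> (\<lambda>j. r (i1, j)) ` {1..N-1} \<longrightarrow>
               m2 \<notin> (\<lambda>j. r (i2, j)) ` {1..N-1} \<longrightarrow> m1 \<noteq> m2))"
proof -
  define F where "F = cross_flows N"
  have finF: "finite F" unfolding F_def cross_flows_def by simp
  have rng: "\<And>i j. i \<in> {1..N} \<Longrightarrow> j \<in> {1..N-1} \<Longrightarrow> r (i, j) \<in> {1..N}"
    using assms(2) unfolding is_routing_def cross_flows_def by auto
  have bound: "card {f\<in>F. fst f = i \<and> r f = m} \<le> 1 \<and> card {f\<in>F. snd f = i \<and> r f = m} \<le> 1"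
    if "i \<in> {1..N}" "m \<in> {1..N}" for i m
  proof -
    let ?g = "(\<lambda>(i, m). max (\<Sum>f\<in>{f\<in>F. cross_src f = i \<and> r f = m}. cross_dem f)
                          (\<Sum>f\<in>{f\<in>F. cross_dst f = i \<and> r f = m}. cross_dem f))"
    have "?g (i, m) \<le> Max (?g ` ({1..N} \<times> {1..N}))"
      by (rule Max_ge) (use that in auto)
    also have "\<dots> = 1" using assms(3) unfolding congestion_def F_def by simp
    finally have "?g (i, m) \<le> 1" .
    then show ?thesis by (simp add: cross_dem_def cross_src_def cross_dst_def)
  qed
  have two: "card {a, b} = 2" if "a \<noteq> b" for a b :: "nat \<times> nat" using that by simp
  have P1: "inj_on (\<lambda>j. r (i, j)) {1..N-1}" if i: "i \<in> {1..N}" for i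
  proof (rule inj_onI, rule ccontr)
    fix j1 j2 assume j: "j1 \<in> {1..N-1}" "j2 \<in> {1..N-1}" "r (i, j1) = r (i, j2)" "j1 \<noteq> j2"
    let ?m = "r (i, j1)"
    have m: "?m \<in> {1..N}" using rng i j by blast
    have sub: "{(i,j1),(i,j2)} \<subseteq> {f\<in>F. fst f = i \<and> r f = ?m}"
      using i j unfolding F_def cross_flows_def by auto
    have fin: "finite {f\<in>F. fst f = i \<and> r f = ?m}" using finF by simp
    have "2 \<le> card {f\<in>F. fst f = i \<and> r f = ?m}"
      using card_mono[OF fin sub] two[of "(i,j1)" "(i,j2)"] j by simp
    then show False using bound[OF i m] by simp
  qed
  have P2: "inj_on (\<lambda>i. r (i, j)) {1..N}" if j: "j \<in> {1..N-1}" for j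
  proof (rule inj_onI, rule ccontr)
    fix i1 i2 assume i: "i1 \<in> {1..N}" "i2 \<in> {1..N}" "r (i1, j) = r (i2, j)" "i1 \<noteq> i2"
    let ?m = "r (i1, j)"
    have m: "?m \<in> {1..N}" using rng i j by blast
    have jN: "j \<in> {1..N}" using j by auto
    have sub: "{(i1,j),(i2,j)} \<subseteq> {f\<in>F. snd f = j \<and> r f = ?m}"
      using i j unfolding F_def cross_flows_def by auto
    have fin: "finite {f\<in>F. snd f = j \<and> r f = ?m}" using finF by simp
    have "2 \<le> card {f\<in>F. snd f = j \<and> r f = ?m}"
      using card_mono[OF fin sub] two[of "(i1,j)" "(i2,j)"] i by simp
    then show False using bound[OF jN m] by simp
  qed
  have P3: False if i: "i1 \<in> {1..N}" "i2 \<in> {1..N}" "i1 \<noteq> i2" and m: "m \<in> {1..N}"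
    and miss: "m \<notin> (\<lambda>j. r (i1, j)) ` {1..N-1}" "m \<notin> (\<lambda>j. r (i2, j)) ` {1..N-1}" for i1 i2 m
  proof -
    have ex: "\<exists>i\<in>{1..N} - {i1, i2}. r (i, j) = m" if j: "j \<in> {1..N-1}" for j
    proof -
      have "(\<lambda>i. r (i, j)) ` {1..N} \<subseteq> {1..N}" using rng j by auto
      moreover have "card ((\<lambda>i. r (i, j)) ` {1..N}) = card {1..N}"
        using card_image[OF P2[OF j]] .
      ultimately have "(\<lambda>i. r (i, j)) ` {1..N} = {1..N}"
        by (simp add: card_subset_eq)
      with m have "m \<in> (\<lambda>i. r (i, j)) ` {1..N}" by simp
      then obtain i where "i \<in> {1..N}" "r (i, j) = m" by blast
      moreover have "i \<noteq> i1" "i \<noteq> i2" using miss j \<open>r (i, j) = m\<close> by blast+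
      ultimately show ?thesis by blast
    qed
    define g where "g j = (SOME i. i \<in> {1..N} - {i1, i2} \<and> r (i, j) = m)" for j
    have g: "g j \<in> {1..N} - {i1, i2} \<and> r (g j, j) = m" if "j \<in> {1..N-1}" for j
      unfolding g_def using someI_ex[OF ex[OF that, unfolded Bex_def]] .
    have "inj_on g {1..N-1}"
    proof (rule inj_onI)
      fix j1 j2 assume j: "j1 \<in> {1..N-1}" "j2 \<in> {1..N-1}" "g j1 = g j2"
      have "g j1 \<in> {1..N}" using g[OF j(1)] by blast
      moreover have "r (g j1, j1) = r (g j1, j2)" using g[OF j(1)] g[OF j(2)] j(3) by simp
      ultimately show "j1 = j2" using P1 j(1,2) unfolding inj_on_def by blast
    qed
    moreover have "g ` {1..N-1} \<subseteq> {1..N} - {i1, i2}" using g by blast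
    ultimately have "card {1..N-1} \<le> card ({1..N} - {i1, i2})"
      by (meson card_inj_on_le finite_Diff finite_atLeastAtMost)
    moreover have "card ({1..N} - {i1, i2}) = N - 2"
      using i by (subst card_Diff_subset) auto
    ultimately show False using assms(1) by simp
  qed
  show ?thesis using P1 P2 P3 by blast
qed

end
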